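(* Let $\omega>0$ and, for $\tau>0$, set $\sigma=\omega\sqrt\tau$. Let $w:\mathbb{R}\to\mathbb{R}$ be continuous with $0<L\le w(x)\le U$ for all $x\in\mathbb{R}$ for some constants $L,U$, and let $w$ be twice differentiable on $\mathbb{R}$ with $|w''(x)|<M$ for some $M$ and all $x\in\mathbb{R}$. Define, for $x_1,x_2\in\mathbb{R}$ and $\tau>0$, $$v(x_1,x_2;\tau)=\frac{\int_{\mathbb{R}}k_{\sqrt2\sigma}(y;x_2)\,w(y)\,\mathrm{d}y}{\int_{\mathbb{R}}k_{\sigma}(y;x_2)\,w(y)\,\mathrm{d}y}\int_{\mathbb{R}}k_{\sigma/\sqrt2}\Bigl(z;\tfrac12(x_1+x_2)\Bigr)\frac{w(z)}{\int_{\mathbb{R}}k_\sigma(y;z)\,w(y)\,\mathrm{d}y}\,\mathrm{d}z,$$ where $k_s(\cdot;x)$ denotes the Gaussian density with mean $x$ and standard deviation $s$. Let $\tau_0=\frac{2L}{M\omega^2}$. Then there is a constant $C>0$ such that $|v(x_1,x_2;\tau)-1|\le C\tau$ for all $x_1,x_2\in\mathbb{R}$ and all $\tau\in(0,\tau_0)$.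
   Context: The function $v$ is the ratio of the two-step transition density of a one-dimensional random walk with Gaussian kernel of standard deviation $\sigma$ and weighting function $w$ to the one-step density of the same model with standard deviation $\sqrt2\sigma$. *)

theory Defs
  imports "HOL-Probability.Probability"
begin

definition gauss_k :: "real \<Rightarrow> real \<Rightarrow> real \<Rightarrow> real" where
  "gauss_k s y x = normal_density x s y"

definition smooth_w :: "(real \<Rightarrow> real) \<Rightarrow> real \<Rightarrow> real \<Rightarrow> real" where
  "smooth_w w s x = (\<integral>y. gauss_k s y x * w y \<partial>lborel)"

definition v_ratio :: "real \<Rightarrow> (real \<Rightarrow> real) \<Rightarrow> real \<Rightarrow> real \<Rightarrow> real \<Rightarrow> real" where
  "v_ratio \<omega> w x1 x2 \<tau> =
     (let \<sigma> = \<omega> * sqrt \<tau> in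
      smooth_w w (sqrt 2 * \<sigma>) x2 / smooth_w w \<sigma> x2 *
      (\<integral>z. gauss_k (\<sigma> / sqrt 2) z ((x1 + x2) / 2) * w z / smooth_w w \<sigma> z \<partial>lborel))"

end

theory Submission
  imports Defs
begin

lemma taylor2:
  fixes w w' w'' :: "real \<Rightarrow> real"
  assumes d1: "\<And>x. (w has_real_derivative w' x) (at x)"
    and d2: "\<And>x. (w' has_real_derivative w'' x) (at x)"
    and b: "\<And>x. \<bar>w'' x\<bar> \<le> M"
  shows "\<bar>w y - w x - w' x * (y - x)\<bar> \<le> M / 2 * (y - x)\<^sup>2"
proof (cases "y = x")
  case True then show ?thesis by simp
next
  case False
  define diff where "diff = (\<lambda>m::nat. if m = 0 then w else if m = 1 then w' else w'')"
  have "\<exists>t. (if y < x then y < t \<and> t < x else x < t \<and> t < y) \<and>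
    w y = (\<Sum>m<2. (diff m x / fact m) * (y - x)^m) + (diff 2 t / fact 2) * (y - x)^2"
    apply (rule Taylor[where a="min x y" and b="max x y"])
    using False d1 d2 by (auto simp: diff_def less_2_cases_iff)
  then obtain t where "w y = (\<Sum>m<2. (diff m x / fact m) * (y - x)^m) + (diff 2 t / fact 2) * (y - x)^2"
    by blast
  then have "w y - w x - w' x * (y - x) = w'' t / 2 * (y - x)^2"
    by (simp add: diff_def numeral_2_eq_2)
  also have "\<bar>\<dots>\<bar> \<le> M / 2 * (y - x)^2"
    using b[of t] by (simp add: abs_mult mult_right_mono)
  finally show ?thesis .
qed

lemma smooth_props:
  fixes w w' w'' :: "real \<Rightarrow> real"
  assumes wm[measurable]: "w \<in> borel_measurable borel"
    and s: "s > 0"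
    and L: "\<And>x. L \<le> w x" and U: "\<And>x. w x \<le> U" and L0: "0 < L"
    and d1: "\<And>x. (w has_real_derivative w' x) (at x)"
    and d2: "\<And>x. (w' has_real_derivative w'' x) (at x)"
    and b: "\<And>x. \<bar>w'' x\<bar> \<le> M"
  shows "\<bar>smooth_w w s x - w x\<bar> \<le> M / 2 * s\<^sup>2" "L \<le> smooth_w w s x"
proof -
  define k where "k = (\<lambda>y. normal_density x s y)"
  have ik: "integrable lborel k" using s by (simp add: k_def)
  have ik1: "integrable lborel (\<lambda>y. k y * (y - x))"
    using integrable_normal_moment[OF s, of x 1] by (simp add: k_def)
  have ik2: "integrable lborel (\<lambda>y. k y * (y - x)^2)"
    using integrable_normal_moment[OF s, of x 2] by (simp add: k_def)
  have Ik: "(\<integral>y. k y \<partial>lborel) = 1" using s by (simp add: k_def)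
  have Ik1: "(\<integral>y. k y * (y - x) \<partial>lborel) = 0"
    using integral_normal_moment_odd[OF s, of x 0] by (simp add: k_def)
  have Ik2: "(\<integral>y. k y * (y - x)^2 \<partial>lborel) = s^2"
    using integral_normal_moment_even[OF s, of x 1] by (simp add: k_def)
  have ikw: "integrable lborel (\<lambda>y. k y * w y)"
  proof (rule Bochner_Integration.integrable_bound[where f="\<lambda>y. k y * U"])
    show "integrable lborel (\<lambda>y. k y * U)" using ik by simp
    show "(\<lambda>y. k y * w y) \<in> borel_measurable lborel" unfolding k_def by measurable
    show "AE y in lborel. norm (k y * w y) \<le> norm (k y * U)"
    proof (intro AE_I2)
      fix y
      have "\<bar>w y\<bar> \<le> \<bar>U\<bar>" using L[of y] U[of y] L0 by linarith
      then show "norm (k y * w y) \<le> norm (k y * U)"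
        by (simp add: abs_mult k_def mult_left_mono)
    qed
  qed
  have S: "smooth_w w s x = (\<integral>y. k y * w y \<partial>lborel)"
    by (simp add: smooth_w_def gauss_k_def k_def)
  define R where "R = (\<lambda>y. w y - w x - w' x * (y - x))"
  have eq: "(\<lambda>y. k y * w y) = (\<lambda>y. k y * w x + (w' x * (k y * (y - x)) + k y * R y))"
    by (auto simp: R_def algebra_simps)
  have ikR: "integrable lborel (\<lambda>y. k y * R y)"
  proof -
    have "integrable lborel (\<lambda>y. k y * w y - k y * w x - w' x * (k y * (y - x)))"
      using ikw ik ik1 by auto
    then show ?thesis by (simp add: R_def algebra_simps)
  qed
  have "(\<integral>y. k y * w y \<partial>lborel) = w x + (\<integral>y. k y * R y \<partial>lborel)"
  proof -
    have i0: "integrable lborel (\<lambda>y. k y * w x)" using ik by simp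
    have i1: "integrable lborel (\<lambda>y. w' x * (k y * (y - x)))" using ik1 by simp
    have i3: "integrable lborel (\<lambda>y. w' x * (k y * (y - x)) + k y * R y)" using i1 ikR by auto
    have "(\<integral>y. k y * w y \<partial>lborel) = (\<integral>y. k y * w x \<partial>lborel) + (\<integral>y. w' x * (k y * (y - x)) + k y * R y \<partial>lborel)"
      unfolding eq by (rule Bochner_Integration.integral_add[OF i0 i3])
    also have "(\<integral>y. w' x * (k y * (y - x)) + k y * R y \<partial>lborel) = (\<integral>y. w' x * (k y * (y - x)) \<partial>lborel) + (\<integral>y. k y * R y \<partial>lborel)"
      by (rule Bochner_Integration.integral_add[OF i1 ikR])
    finally show ?thesis using Ik Ik1 by simp
  qed
  moreover have "\<bar>\<integral>y. k y * R y \<partial>lborel\<bar> \<le> (\<integral>y. M / 2 * (k y * (y - x)^2) \<partial>lborel)"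
  proof (rule integral_abs_bound_integral)
    show "integrable lborel (\<lambda>y. M / 2 * (k y * (y - x)\<^sup>2))" using ik2 by simp
    show "integrable lborel (\<lambda>y. k y * R y)" by (rule ikR)
    fix y
    have "\<bar>R y\<bar> \<le> M / 2 * (y - x)\<^sup>2" unfolding R_def by (rule taylor2[OF d1 d2 b])
    moreover have "0 \<le> k y" by (simp add: k_def)
    ultimately have "k y * \<bar>R y\<bar> \<le> k y * (M / 2 * (y - x)\<^sup>2)"
      by (rule mult_left_mono)
    moreover have "\<bar>k y * R y\<bar> = k y * \<bar>R y\<bar>" using \<open>0 \<le> k y\<close> by (simp add: abs_mult)
    ultimately show "\<bar>k y * R y\<bar> \<le> M / 2 * (k y * (y - x)\<^sup>2)"
      by (simp only: mult.left_commute)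
  qed
  moreover have "(\<integral>y. M / 2 * (k y * (y - x)^2) \<partial>lborel) = M / 2 * s^2"
    using Ik2 by simp
  ultimately show "\<bar>smooth_w w s x - w x\<bar> \<le> M / 2 * s\<^sup>2" using S Ik2 by simp
  have "(\<integral>y. k y * L \<partial>lborel) \<le> (\<integral>y. k y * w y \<partial>lborel)"
    apply (rule integral_mono)
    using ik ikw L by (auto simp: k_def mult_left_mono)
  then show "L \<le> smooth_w w s x" using S Ik by simp
qed

lemma arith_fin:
  fixes r I a :: real
  assumes "\<bar>r - 1\<bar> \<le> 3 * a" "\<bar>I - 1\<bar> \<le> a" "0 \<le> a" "a < 1"
  shows "\<bar>r * I - 1\<bar> \<le> 7 * a"
proof -
  have "\<bar>I\<bar> \<le> 2" using assms by linarith
  have "\<bar>(r - 1) * I\<bar> \<le> 3 * a * 2"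
    unfolding abs_mult using assms \<open>\<bar>I\<bar> \<le> 2\<close> by (intro mult_mono) auto
  moreover have "r * I - 1 = (r - 1) * I + (I - 1)" by (simp add: algebra_simps)
  ultimately show ?thesis using assms by linarith
qed

theorem lemma2:
  fixes \<omega> L U M :: real and w w' w'' :: "real \<Rightarrow> real"
  assumes "\<omega> > 0"
    and "continuous_on UNIV w"
    and "0 < L" and "\<And>x. L \<le> w x" and "\<And>x. w x \<le> U"
    and "\<And>x. (w has_real_derivative w' x) (at x)"
    and "\<And>x. (w' has_real_derivative w'' x) (at x)"
    and "\<And>x. \<bar>w'' x\<bar> < M"
  shows "\<exists>C > 0. \<forall>x1 x2 \<tau>. 0 < \<tau> \<and> \<tau> < 2 * L / (M * \<omega>\<^sup>2) \<longrightarrow>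
           \<bar>v_ratio \<omega> w x1 x2 \<tau> - 1\<bar> \<le> C * \<tau>"
proof -
  have M0: "0 < M" using assms(8)[of 0] by linarith
  have Mb: "\<And>x. \<bar>w'' x\<bar> \<le> M" using assms(8) less_imp_le by blast
  have wm[measurable]: "w \<in> borel_measurable borel"
    using assms(2) by (rule borel_measurable_continuous_onI)
  note SP = smooth_props[OF wm _ assms(4) assms(5) assms(3) assms(6) assms(7) Mb]
  define C where "C = 4 * M * \<omega>\<^sup>2 / L"
  have C0: "C > 0" using M0 assms(1) assms(3) by (simp add: C_def)
  show ?thesis
  proof (intro exI[of _ C] conjI allI impI C0)
    fix x1 x2 \<tau> :: real
    assume h: "0 < \<tau> \<and> \<tau> < 2 * L / (M * \<omega>\<^sup>2)"
    define \<sigma> where "\<sigma> = \<omega> * sqrt \<tau>"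
    have \<sigma>0: "\<sigma> > 0" using h assms(1) by (simp add: \<sigma>_def)
    have \<sigma>2: "\<sigma>\<^sup>2 = \<omega>\<^sup>2 * \<tau>" using h by (simp add: \<sigma>_def power_mult_distrib)
    define a where "a = M * \<sigma>\<^sup>2 / (2 * L)"
    have a0: "0 \<le> a" using M0 assms(3) by (simp add: a_def)
    have "\<tau> * (M * \<omega>\<^sup>2) < 2 * L" using h M0 assms(1)
      by (simp add: pos_less_divide_eq)
    then have a1: "a < 1" using assms(3) by (simp add: a_def \<sigma>2 algebra_simps)
    define A where "A = smooth_w w (sqrt 2 * \<sigma>) x2"
    define B where "B = smooth_w w \<sigma> x2"
    have hA: "\<bar>A - w x2\<bar> \<le> M * \<sigma>\<^sup>2"
      using SP(1)[of "sqrt 2 * \<sigma>" x2] \<sigma>0 by (simp add: A_def power_mult_distrib)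
    have hB: "\<bar>B - w x2\<bar> \<le> M / 2 * \<sigma>\<^sup>2" using SP(1)[of \<sigma> x2] \<sigma>0 by (simp add: B_def)
    have BL: "L \<le> B" using SP(2)[of \<sigma> x2] \<sigma>0 by (simp add: B_def)
    have r: "\<bar>A / B - 1\<bar> \<le> 3 * a"
    proof -
      have Bp: "B > 0" using BL assms(3) by linarith
      have "A / B - 1 = (A - B) / B" using Bp by (simp add: field_simps)
      then have "\<bar>A / B - 1\<bar> = \<bar>A - B\<bar> / B" using Bp by simp
      also have "\<dots> \<le> (3 / 2 * M * \<sigma>\<^sup>2) / L"
      proof (rule frac_le)
        show "\<bar>A - B\<bar> \<le> 3 / 2 * M * \<sigma>\<^sup>2" using hA hB by arith
      qed (use BL assms(3) M0 in auto)
      finally show ?thesis by (simp add: a_def)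
    qed
    define S where "S = (\<lambda>z. smooth_w w \<sigma> z)"
    have Sm[measurable]: "S \<in> borel_measurable lborel"
      unfolding S_def smooth_w_def
      by (rule lborel.borel_measurable_lebesgue_integral)
         (unfold gauss_k_def normal_density_def, measurable)
    have SL: "\<And>z. L \<le> S z" using SP(2) \<sigma>0 by (simp add: S_def)
    have g1: "\<And>z. \<bar>w z / S z - 1\<bar> \<le> a"
    proof -
      fix z
      have Sp: "S z > 0" using SL[of z] assms(3) by linarith
      have "w z / S z - 1 = (w z - S z) / S z" using Sp by (simp add: field_simps)
      then have "\<bar>w z / S z - 1\<bar> = \<bar>S z - w z\<bar> / S z" using Sp by simp
      also have "\<dots> \<le> (M / 2 * \<sigma>\<^sup>2) / L"
        using SP(1)[of \<sigma> z] \<sigma>0 SL[of z] assms(3) Sp M0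
        by (intro frac_le) (auto simp: S_def)
      finally show "\<bar>w z / S z - 1\<bar> \<le> a" by (simp add: a_def)
    qed
    define m where "m = (x1 + x2) / 2"
    define k where "k = (\<lambda>z. normal_density m (\<sigma> / sqrt 2) z)"
    have s': "\<sigma> / sqrt 2 > 0" using \<sigma>0 by simp
    have ik: "integrable lborel k" using s' by (simp add: k_def)
    have Ik: "(\<integral>z. k z \<partial>lborel) = 1" using s' by (simp add: k_def)
    have kn: "\<And>z. 0 \<le> k z" by (simp add: k_def)
    have ih: "integrable lborel (\<lambda>z. k z * w z / S z - k z)"
    proof (rule Bochner_Integration.integrable_bound[where f="\<lambda>z. k z * a"])
      show "integrable lborel (\<lambda>z. k z * a)" using ik by simp
      show "(\<lambda>z. k z * w z / S z - k z) \<in> borel_measurable lborel" unfolding k_def by measurable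
      show "AE z in lborel. norm (k z * w z / S z - k z) \<le> norm (k z * a)"
      proof (intro AE_I2)
        fix z
        have "k z * w z / S z - k z = k z * (w z / S z - 1)" by (simp add: algebra_simps)
        then have "\<bar>k z * w z / S z - k z\<bar> = k z * \<bar>w z / S z - 1\<bar>" using kn[of z] by (simp add: abs_mult)
        also have "\<dots> \<le> k z * a" using g1[of z] kn[of z] by (rule mult_left_mono)
        finally show "norm (k z * w z / S z - k z) \<le> norm (k z * a)" using kn[of z] a0 by simp
      qed
    qed
    define I where "I = (\<integral>z. k z * w z / S z \<partial>lborel)"
    have ii: "integrable lborel (\<lambda>z. k z * w z / S z)"
    proof -
      have "integrable lborel (\<lambda>z. (k z * w z / S z - k z) + k z)"
        by (rule Bochner_Integration.integrable_add[OF ih ik])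
      moreover have "(\<lambda>z. (k z * w z / S z - k z) + k z) = (\<lambda>z. k z * w z / S z)" by auto
      ultimately show ?thesis by simp
    qed
    have "I - 1 = (\<integral>z. k z * w z / S z - k z \<partial>lborel)"
      unfolding I_def using Ik Bochner_Integration.integral_diff[OF ii ik] by simp
    also have "\<bar>\<dots>\<bar> \<le> (\<integral>z. k z * a \<partial>lborel)"
    proof (rule integral_abs_bound_integral[OF ih])
      show "integrable lborel (\<lambda>z. k z * a)" using ik by simp
      fix z
      have "k z * w z / S z - k z = k z * (w z / S z - 1)" by (simp add: algebra_simps)
      then have "\<bar>k z * w z / S z - k z\<bar> = k z * \<bar>w z / S z - 1\<bar>" using kn[of z] by (simp add: abs_mult)
      also have "\<dots> \<le> k z * a" using g1[of z] kn[of z] by (rule mult_left_mono)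
      finally show "\<bar>k z * w z / S z - k z\<bar> \<le> k z * a" .
    qed
    also have "(\<integral>z. k z * a \<partial>lborel) = a" using Ik by simp
    finally have Ib: "\<bar>I - 1\<bar> \<le> a" .
    have v: "v_ratio \<omega> w x1 x2 \<tau> = A / B * I"
      by (simp add: v_ratio_def Let_def A_def B_def I_def S_def k_def m_def \<sigma>_def gauss_k_def)
    have "\<bar>v_ratio \<omega> w x1 x2 \<tau> - 1\<bar> \<le> 7 * a"
      unfolding v by (rule arith_fin[OF r Ib a0 a1])
    also have "7 * a \<le> C * \<tau>"
      using M0 assms(3) h by (simp add: a_def C_def \<sigma>2 field_simps)
    finally show "\<bar>v_ratio \<omega> w x1 x2 \<tau> - 1\<bar> \<le> C * \<tau>" .
  qed
qed

end
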